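(* Let $\delta>0$ be an ordinal and $\mathcal I_{\omega^\delta}=\{I\subset\omega^\delta:\omega^\delta\not\hookrightarrow I\}$. Then $\mathcal I_{\omega^\delta}$ is an ideal of $P(\omega^\delta)$ and (a) $\mathbb P(\omega^\delta)=\langle \mathcal I_{\omega^\delta}^+,\subset\rangle$, $\mathrm{sm}(\mathbb P(\omega^\delta))=\langle\mathcal I_{\omega^\delta}^+,\subset_{\mathcal I_{\omega^\delta}}\rangle$ and $\mathrm{sq}(\mathbb P(\omega^\delta))=(P(\omega^\delta)/\mathcal I_{\omega^\delta})^+$; (b) if $\delta\ge\omega$, then $|\mathrm{sq}(\mathbb P(\omega^\delta))|\le 2^{|\delta|}$.
   Context: $\mathbb P(X)$ is the set of subsets of the ordinal $X$ order-isomorphic to $X$, ordered by inclusion. $L\hookrightarrow A$ means $L$ order-embeds into $A$. For an ideal $\mathcal I$ on a set $X$, $\mathcal I^+=P(X)\setminus\mathcal I$, and $A\subset_{\mathcal I}B$ iff $A\setminus B\in\mathcal I$; $(P(X)/\mathcal I)^+$ is the set of nonzero elements of the quotient Boolean algebra. $\mathrm{sm}$ and $\mathrm{sq}$ denote separative modification and separative quotient of a preorder ($p\le^*q$ iff every $r\le p$ has some $s\le r$ with $s\le q$; $\mathrm{sq}$ is the antisymmetric quotient of $\le^*$). *)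

theory Defs
  imports Main
begin

text \<open>Ordinals are represented by well-order relations (as in HOL's BNF cardinal library).
The ordinal power omega^delta is represented by the standard construction: finitely supported
functions from the field of delta to the naturals, compared at the largest point
(w.r.t. delta) where they differ.\<close>

definition omega_exp_carrier :: "'b rel \<Rightarrow> ('b \<Rightarrow> nat) set" where
  "omega_exp_carrier d = {f. finite {x. f x \<noteq> 0} \<and> (\<forall>x. x \<notin> Field d \<longrightarrow> f x = 0)}"

definition omega_exp :: "'b rel \<Rightarrow> ('b \<Rightarrow> nat) rel" where
  "omega_exp d = {(f, g). f \<in> omega_exp_carrier d \<and> g \<in> omega_exp_carrier d \<and>
      (f = g \<or> (\<exists>x \<in> Field d. f x < g x \<and>
                 (\<forall>y \<in> Field d. (x, y) \<in> d \<and> y \<noteq> x \<longrightarrow> f y = g y)))}"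

definition oemb :: "'a rel \<Rightarrow> 'a set \<Rightarrow> bool" where
  "oemb r A = (\<exists>f. f ` Field r \<subseteq> A \<and>
     (\<forall>x \<in> Field r. \<forall>y \<in> Field r. (x, y) \<in> r \<and> x \<noteq> y \<longrightarrow> (f x, f y) \<in> r \<and> f x \<noteq> f y))"

definition PP :: "'a rel \<Rightarrow> 'a set set" where
  "PP r = {A. A \<subseteq> Field r \<and> (\<exists>f. bij_betw f (Field r) A \<and>
     (\<forall>x \<in> Field r. \<forall>y \<in> Field r. (x, y) \<in> r \<longleftrightarrow> (f x, f y) \<in> r))}"

definition emb_ideal :: "'a rel \<Rightarrow> 'a set set" where
  "emb_ideal r = {I. I \<subseteq> Field r \<and> \<not> oemb r I}"

definition is_ideal :: "'a set \<Rightarrow> 'a set set \<Rightarrow> bool" where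
  "is_ideal X I = (I \<subseteq> Pow X \<and> {} \<in> I \<and> X \<notin> I \<and>
     (\<forall>A \<in> I. \<forall>B. B \<subseteq> A \<longrightarrow> B \<in> I) \<and> (\<forall>A \<in> I. \<forall>B \<in> I. A \<union> B \<in> I))"

definition sep_le :: "'p set \<Rightarrow> ('p \<Rightarrow> 'p \<Rightarrow> bool) \<Rightarrow> 'p \<Rightarrow> 'p \<Rightarrow> bool" where
  "sep_le P le p q = (\<forall>r \<in> P. le r p \<longrightarrow> (\<exists>s \<in> P. le s r \<and> le s q))"

definition sq_equiv :: "'p set \<Rightarrow> ('p \<Rightarrow> 'p \<Rightarrow> bool) \<Rightarrow> 'p rel" where
  "sq_equiv P le = {(p, q). p \<in> P \<and> q \<in> P \<and> sep_le P le p q \<and> sep_le P le q p}"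

definition sq_carrier :: "'p set \<Rightarrow> ('p \<Rightarrow> 'p \<Rightarrow> bool) \<Rightarrow> 'p set set" where
  "sq_carrier P le = P // sq_equiv P le"

definition sq_le :: "'p set \<Rightarrow> ('p \<Rightarrow> 'p \<Rightarrow> bool) \<Rightarrow> 'p set \<Rightarrow> 'p set \<Rightarrow> bool" where
  "sq_le P le C D = (\<exists>p \<in> C. \<exists>q \<in> D. sep_le P le p q)"

definition bq_rel :: "'a set \<Rightarrow> 'a set set \<Rightarrow> 'a set rel" where
  "bq_rel X I = {(A, B). A \<subseteq> X \<and> B \<subseteq> X \<and> (A - B) \<union> (B - A) \<in> I}"

definition bq_nonzero :: "'a set \<Rightarrow> 'a set set \<Rightarrow> 'a set set set" where
  "bq_nonzero X I = (Pow X // bq_rel X I) - {bq_rel X I `` {{}}}"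

definition bq_le :: "'a set set \<Rightarrow> 'a set set \<Rightarrow> 'a set set \<Rightarrow> bool" where
  "bq_le I C D = (\<exists>A \<in> C. \<exists>B \<in> D. A - B \<in> I)"

definition order_iso :: "'x set \<Rightarrow> ('x \<Rightarrow> 'x \<Rightarrow> bool) \<Rightarrow> 'y set \<Rightarrow> ('y \<Rightarrow> 'y \<Rightarrow> bool) \<Rightarrow> ('x \<Rightarrow> 'y) \<Rightarrow> bool" where
  "order_iso A leA B leB f = (bij_betw f A B \<and> (\<forall>x \<in> A. \<forall>y \<in> A. leA x y \<longleftrightarrow> leB (f x) (f y)))"

end

theory Submission
  imports Defs "HOL-Library.Multiset"
begin

locale OE =
  fixes d :: "'b rel"
  assumes WO: "well_order_on (Field d) d"
begin

abbreviation "C \<equiv> omega_exp_carrier d"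
abbreviation "W \<equiv> omega_exp d"

definition lt :: "('b \<Rightarrow> nat) \<Rightarrow> ('b \<Rightarrow> nat) \<Rightarrow> bool" where
 "lt f g = (\<exists>x \<in> Field d. f x < g x \<and> (\<forall>y \<in> Field d. (x, y) \<in> d \<and> y \<noteq> x \<longrightarrow> f y = g y))"

lemma d_refl: "x \<in> Field d \<Longrightarrow> (x,x) \<in> d"
  using WO unfolding well_order_on_def linear_order_on_def partial_order_on_def preorder_on_def refl_on_def by blast
lemma d_trans: "(x,y)\<in>d \<Longrightarrow> (y,z) \<in> d \<Longrightarrow> (x,z)\<in>d"
  using WO unfolding well_order_on_def linear_order_on_def partial_order_on_def preorder_on_def trans_def by blast
lemma d_antisym: "(x,y)\<in>d \<Longrightarrow> (y,x) \<in> d \<Longrightarrow> x = y"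
  using WO unfolding well_order_on_def linear_order_on_def partial_order_on_def antisym_def by blast
lemma d_total: "x \<in> Field d \<Longrightarrow> y \<in> Field d \<Longrightarrow> (x,y) \<in> d \<or> (y,x) \<in> d"
  using WO d_refl unfolding well_order_on_def linear_order_on_def total_on_def by metis
lemma d_wf: "wf (d - Id)"
  using WO unfolding well_order_on_def by blast
lemma d_Field: "(x,y) \<in> d \<Longrightarrow> x \<in> Field d \<and> y \<in> Field d"
  by (auto simp: Field_def)

lemma W_iff: "(f,g) \<in> W \<longleftrightarrow> f\<in>C \<and> g\<in>C \<and> (f = g \<or> lt f g)"
  by (simp add: omega_exp_def lt_def)

lemma Field_W: "Field W = C"
proof
  show "Field W \<subseteq> C" by (auto simp: Field_def W_iff)
  show "C \<subseteq> Field W" proof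
    fix f assume "f \<in> C" then have "(f,f) \<in> W" by (simp add: W_iff)
    then show "f \<in> Field W" by (auto simp: Field_def)
  qed
qed

lemma C_fin: "f \<in> C \<Longrightarrow> finite {x. f x \<noteq> 0}"
  by (simp add: omega_exp_carrier_def)
lemma C_out: "f \<in> C \<Longrightarrow> x \<notin> Field d \<Longrightarrow> f x = 0"
  by (simp add: omega_exp_carrier_def)

lemma finite_max:
  assumes "finite D" "D \<noteq> {}" "D \<subseteq> Field d"
  shows "\<exists>m\<in>D. \<forall>y\<in>D. (y,m) \<in> d"
  using assms
proof (induction D rule: finite_ne_induct)
  case (singleton x) then show ?case using d_refl by auto
next
  case (insert x F)
  then obtain m where m: "m \<in> F" "\<forall>y\<in>F. (y,m) \<in> d" by auto
  have "x \<in> Field d" "m \<in> Field d" using insert m by auto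
  then consider "(x,m) \<in> d" | "(m,x) \<in> d" using d_total by blast
  then show ?case
  proof cases
    case 1 then show ?thesis using m by auto
  next
    case 2 then show ?thesis using m d_trans d_refl \<open>x \<in> Field d\<close> by blast
  qed
qed

lemma maxdiff:
  assumes "f \<in> C" "g \<in> C" "f \<noteq> g"
  shows "\<exists>x\<in>Field d. f x \<noteq> g x \<and> (\<forall>y\<in>Field d. (x,y) \<in> d \<and> y \<noteq> x \<longrightarrow> f y = g y)"
proof -
  let ?D = "{x. f x \<noteq> g x}"
  have "?D \<subseteq> {x. f x \<noteq> 0} \<union> {x. g x \<noteq> 0}" by auto
  then have fin: "finite ?D" using C_fin assms by (meson finite_UnI finite_subset)
  have ne: "?D \<noteq> {}" using assms(3) by auto
  have sub: "?D \<subseteq> Field d"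
  proof
    fix x assume "x \<in> ?D"
    then show "x \<in> Field d" using C_out[OF assms(1), of x] C_out[OF assms(2), of x] by (cases "x \<in> Field d") auto
  qed
  obtain m where m: "m \<in> ?D" "\<forall>y\<in>?D. (y,m) \<in> d" using finite_max[OF fin ne sub] by blast
  show ?thesis
  proof (intro bexI conjI ballI impI)
    show "m \<in> Field d" using m sub by auto
    show "f m \<noteq> g m" using m by auto
    fix y assume "y \<in> Field d" "(m, y) \<in> d \<and> y \<noteq> m"
    then show "f y = g y" using m d_antisym by blast
  qed
qed

lemma above_trans: "(x,y)\<in>d \<Longrightarrow> x\<noteq>y \<Longrightarrow> (y,z)\<in>d \<Longrightarrow> z\<noteq>y \<Longrightarrow> (x,z)\<in>d \<and> z\<noteq>x"
  using d_trans d_antisym by blast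

lemma lt_total: "f \<in> C \<Longrightarrow> g \<in> C \<Longrightarrow> f \<noteq> g \<Longrightarrow> lt f g \<or> lt g f"
  using maxdiff[of f g] unfolding lt_def
  by (metis linorder_neqE_nat)

lemma lt_asym: "lt f g \<Longrightarrow> lt g f \<Longrightarrow> False"
proof -
  assume "lt f g" "lt g f"
  then obtain x y where x: "x \<in> Field d" "f x < g x" "\<forall>z\<in>Field d. (x,z)\<in>d \<and> z\<noteq>x \<longrightarrow> f z = g z"
    and y: "y \<in> Field d" "g y < f y" "\<forall>z\<in>Field d. (y,z)\<in>d \<and> z\<noteq>y \<longrightarrow> g z = f z"
    unfolding lt_def by blast
  show False
  proof (cases "x = y")
    case True then show ?thesis using x y by simp
  next
    case False
    then consider "(x,y) \<in> d" | "(y,x) \<in> d" using d_total x y by blast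
    then show ?thesis
    proof cases
      case 1
      have "f y = g y" using x(3) y(1) 1 False by blast
      then show ?thesis using y(2) by simp
    next
      case 2
      have "g x = f x" using y(3) x(1) 2 False by blast
      then show ?thesis using x(2) by simp
    qed
  qed
qed

lemma lt_irrefl: "\<not> lt f f" unfolding lt_def by auto

lemma lt_trans: "lt f g \<Longrightarrow> lt g h \<Longrightarrow> lt f h"
proof -
  assume "lt f g" "lt g h"
  then obtain x y where x: "x \<in> Field d" "f x < g x" "\<forall>z\<in>Field d. (x,z)\<in>d \<and> z\<noteq>x \<longrightarrow> f z = g z"
    and y: "y \<in> Field d" "g y < h y" "\<forall>z\<in>Field d. (y,z)\<in>d \<and> z\<noteq>y \<longrightarrow> g z = h z"
    unfolding lt_def by blast
  show "lt f h"
  proof (cases "x = y")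
    case True then show ?thesis using x y unfolding lt_def by force
  next
    case False
    then consider "(x,y) \<in> d" | "(y,x) \<in> d" using d_total x y by blast
    then show ?thesis
    proof cases
      case 1
      have "\<forall>z\<in>Field d. (y,z)\<in>d \<and> z\<noteq>y \<longrightarrow> f z = h z"
      proof (intro ballI impI)
        fix z assume "z \<in> Field d" "(y,z)\<in>d \<and> z\<noteq>y"
        then have "(x,z)\<in>d \<and> z\<noteq>x" using above_trans 1 False by blast
        then show "f z = h z" using x(3) y(3) \<open>z \<in> Field d\<close> \<open>(y,z)\<in>d \<and> z\<noteq>y\<close> by simp
      qed
      moreover have "f y = g y" using x(3) y(1) 1 False by blast
      then have "f y < h y" using y(2) by simp
      ultimately show ?thesis using y unfolding lt_def by blast
    next
      case 2
      have "\<forall>z\<in>Field d. (x,z)\<in>d \<and> z\<noteq>x \<longrightarrow> f z = h z"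
      proof (intro ballI impI)
        fix z assume "z \<in> Field d" "(x,z)\<in>d \<and> z\<noteq>x"
        then have "(y,z)\<in>d \<and> z\<noteq>y" using above_trans 2 False by blast
        then show "f z = h z" using x(3) y(3) \<open>z \<in> Field d\<close> \<open>(x,z)\<in>d \<and> z\<noteq>x\<close> by simp
      qed
      moreover have "g x = h x" using y(3) x(1) 2 False by blast
      then have "f x < h x" using x(2) by simp
      ultimately show ?thesis using x unfolding lt_def by blast
    qed
  qed
qed

lemma lt_add:
  assumes "lt f f'" "g = g' \<or> lt g g'"
  shows "lt (\<lambda>x. f x + g x) (\<lambda>x. f' x + g' x)"
  using assms(2)
proof
  assume "g = g'" then show ?thesis using assms(1) unfolding lt_def by force
next
  assume "lt g g'"
  from assms(1) this obtain x y where x: "x \<in> Field d" "f x < f' x" "\<forall>z\<in>Field d. (x,z)\<in>d \<and> z\<noteq>x \<longrightarrow> f z = f' z"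
    and y: "y \<in> Field d" "g y < g' y" "\<forall>z\<in>Field d. (y,z)\<in>d \<and> z\<noteq>y \<longrightarrow> g z = g' z"
    unfolding lt_def by blast
  show ?thesis
  proof (cases "x = y")
    case True then show ?thesis using x y unfolding lt_def
      by (intro bexI[of _ x]) (auto simp: add_less_mono)
  next
    case False
    then consider "(x,y) \<in> d" | "(y,x) \<in> d" using d_total x y by blast
    then show ?thesis
    proof cases
      case 1
      have "\<forall>z\<in>Field d. (y,z)\<in>d \<and> z\<noteq>y \<longrightarrow> f z + g z = f' z + g' z"
      proof (intro ballI impI)
        fix z assume "z \<in> Field d" "(y,z)\<in>d \<and> z\<noteq>y"
        then have "(x,z)\<in>d \<and> z\<noteq>x" using above_trans 1 False by blast
        then show "f z + g z = f' z + g' z" using x(3) y(3) \<open>z \<in> Field d\<close> \<open>(y,z)\<in>d \<and> z\<noteq>y\<close> by simp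
      qed
      moreover have "f y = f' y" using x(3) y(1) 1 False by blast
      then have "f y + g y < f' y + g' y" using y(2) by simp
      ultimately show ?thesis using y unfolding lt_def by blast
    next
      case 2
      have "\<forall>z\<in>Field d. (x,z)\<in>d \<and> z\<noteq>x \<longrightarrow> f z + g z = f' z + g' z"
      proof (intro ballI impI)
        fix z assume "z \<in> Field d" "(x,z)\<in>d \<and> z\<noteq>x"
        then have "(y,z)\<in>d \<and> z\<noteq>y" using above_trans 2 False by blast
        then show "f z + g z = f' z + g' z" using x(3) y(3) \<open>z \<in> Field d\<close> \<open>(x,z)\<in>d \<and> z\<noteq>x\<close> by simp
      qed
      moreover have "g x = g' x" using y(3) x(1) 2 False by blast
      then have "f x + g x < f' x + g' x" using x(2) by simp
      ultimately show ?thesis using x unfolding lt_def by blast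
    qed
  qed
qed

lemma C_add: "f \<in> C \<Longrightarrow> g \<in> C \<Longrightarrow> (\<lambda>x. f x + g x) \<in> C"
proof -
  assume a: "f \<in> C" "g \<in> C"
  have "{x. f x + g x \<noteq> 0} \<subseteq> {x. f x \<noteq> 0} \<union> {x. g x \<noteq> 0}" by auto
  then have "finite {x. f x + g x \<noteq> 0}" using C_fin[OF a(1)] C_fin[OF a(2)] by (meson finite_UnI finite_subset)
  then show ?thesis using a by (simp add: omega_exp_carrier_def)
qed

lemma lt_mult:
  assumes "f \<in> C" "g \<in> C" "lt f g"
  shows "(Abs_multiset f, Abs_multiset g) \<in> mult (d - Id)"
proof -
  from assms(3) obtain x where x: "x \<in> Field d" "f x < g x" "\<forall>z\<in>Field d. (x,z)\<in>d \<and> z\<noteq>x \<longrightarrow> f z = g z"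
    unfolding lt_def by blast
  have ff: "finite {x. f x > 0}" using C_fin[OF assms(1)] by (simp add: gr0_conv_Suc not_gr_zero)
  have fg: "finite {x. g x > 0}" using C_fin[OF assms(2)] by (simp add: gr0_conv_Suc not_gr_zero)
  define I where "I = Abs_multiset (\<lambda>z. min (f z) (g z))"
  define K where "K = Abs_multiset (\<lambda>z. f z - g z)"
  define J where "J = Abs_multiset (\<lambda>z. g z - f z)"
  have fI: "finite {z. min (f z) (g z) > 0}" by (rule finite_subset[OF _ ff]) auto
  have fK: "finite {z. f z - g z > 0}" by (rule finite_subset[OF _ ff]) auto
  have fJ: "finite {z. g z - f z > 0}" by (rule finite_subset[OF _ fg]) auto
  have cI: "count I = (\<lambda>z. min (f z) (g z))" unfolding I_def using fI by (rule count_Abs_multiset)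
  have cK: "count K = (\<lambda>z. f z - g z)" unfolding K_def using fK by (rule count_Abs_multiset)
  have cJ: "count J = (\<lambda>z. g z - f z)" unfolding J_def using fJ by (rule count_Abs_multiset)
  have e1: "Abs_multiset f = I + K"
    by (simp add: multiset_eq_iff count_Abs_multiset[OF ff] cI cK min_def)
  have e2: "Abs_multiset g = I + J"
    by (simp add: multiset_eq_iff count_Abs_multiset[OF fg] cI cJ min_def)
  have "J \<noteq> {#}" using x(2) cJ by (metis count_empty diff_is_0_eq leD)
  moreover have "\<forall>k \<in> set_mset K. \<exists>j \<in> set_mset J. (k, j) \<in> d - Id"
  proof
    fix k assume "k \<in> set_mset K"
    then have "count K k > 0" by simp
    then have k: "f k > g k" using cK by simp
    then have kF: "k \<in> Field d" using C_out[OF assms(1), of k] by fastforce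
    have "k \<noteq> x" using k x by auto
    moreover have "\<not> ((x,k) \<in> d)" using x(3) kF k \<open>k \<noteq> x\<close> by auto
    ultimately have "(k,x) \<in> d - Id" using d_total[OF kF x(1)] by auto
    moreover have "count J x > 0" using x(2) cJ by simp
    then have "x \<in> set_mset J" by simp
    ultimately show "\<exists>j \<in> set_mset J. (k, j) \<in> d - Id" by blast
  qed
  ultimately show ?thesis unfolding e1 e2 by (rule one_step_implies_mult)
qed

lemma W_wo: "Well_order W"
  unfolding well_order_on_def linear_order_on_def partial_order_on_def preorder_on_def
proof (intro conjI)
  show "W \<subseteq> Field W \<times> Field W" by (auto intro: FieldI1 FieldI2)
  show "refl_on (Field W) W" unfolding refl_on_def Field_W by (auto simp: W_iff)
  show "trans W" unfolding trans_def W_iff using lt_trans by blast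
  show "antisym W" unfolding antisym_def W_iff using lt_asym by blast
  show "total_on (Field W) W" unfolding total_on_def Field_W W_iff using lt_total by blast
  have "W - Id \<subseteq> inv_image (mult (d - Id)) Abs_multiset"
    using lt_mult by (auto simp: W_iff)
  then show "wf (W - Id)" using wf_inv_image[OF wf_mult[OF d_wf]] wf_subset by blast
qed

lemma W_C: "(f,g) \<in> W \<Longrightarrow> f \<in> C \<and> g \<in> C" by (simp add: W_iff)
lemma W_lt: "f \<in> C \<Longrightarrow> g \<in> C \<Longrightarrow> ((f,g)\<in>W \<and> f\<noteq>g) \<longleftrightarrow> lt f g"
  using lt_irrefl by (auto simp: W_iff)
lemma W_refl: "f \<in> C \<Longrightarrow> (f,f) \<in> W" by (simp add: W_iff)
lemma W_tot: "f \<in> C \<Longrightarrow> g \<in> C \<Longrightarrow> (f,g)\<in>W \<or> (g,f)\<in>W"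
  using lt_total by (auto simp: W_iff)
lemma W_anti: "(f,g)\<in>W \<Longrightarrow> (g,f)\<in>W \<Longrightarrow> f = g"
  using lt_asym by (auto simp: W_iff)
lemma W_tr: "(f,g)\<in>W \<Longrightarrow> (g,h)\<in>W \<Longrightarrow> (f,h)\<in>W"
  using lt_trans by (auto simp: W_iff)

definition smono :: "('b\<Rightarrow>nat) set \<Rightarrow> (('b\<Rightarrow>nat) \<Rightarrow> ('b\<Rightarrow>nat)) \<Rightarrow> bool" where
  "smono S g = (\<forall>x\<in>S. \<forall>y\<in>S. (x,y)\<in>W \<and> x\<noteq>y \<longrightarrow> (g x, g y)\<in>W \<and> g x \<noteq> g y)"

lemma oemb_iff: "oemb W A \<longleftrightarrow> (\<exists>g. g ` C \<subseteq> A \<and> smono C g)"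
  by (simp add: oemb_def smono_def Field_W)

lemma inflation:
  assumes "g ` C \<subseteq> C" "smono C g" "x \<in> C"
  shows "(x, g x) \<in> W"
proof (rule ccontr)
  assume "(x, g x) \<notin> W"
  let ?Q = "{x\<in>C. (x, g x) \<notin> W}"
  have "x \<in> ?Q" using assms(3) \<open>(x, g x) \<notin> W\<close> by blast
  have wf: "wf (W - Id)" using W_wo unfolding well_order_on_def by blast
  obtain z where z: "z \<in> ?Q" "\<And>y. (y,z) \<in> W - Id \<Longrightarrow> y \<notin> ?Q"
    using wfE_min[OF wf \<open>x \<in> ?Q\<close>] by blast
  have zC: "z \<in> C" using z(1) by blast
  then have gzC: "g z \<in> C" using assms(1) by blast
  have nz: "(z, g z) \<notin> W" using z(1) by blast
  then have gz: "(g z, z) \<in> W" "g z \<noteq> z" using W_tot[OF zC gzC] W_refl[OF zC] by auto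
  then have "(g (g z), g z) \<in> W" "g (g z) \<noteq> g z" using assms(2) zC gzC unfolding smono_def by blast+
  then have "(g z, g (g z)) \<notin> W" using W_anti by blast
  then have "g z \<in> ?Q" using gzC by blast
  moreover have "(g z, z) \<in> W - Id" using gz by blast
  ultimately show False using z(2) by blast
qed

lemma Field_Restr: "A \<subseteq> C \<Longrightarrow> Field (Restr W A) = A"
  using W_refl by (auto simp: Field_def)

lemma dichotomy:
  assumes "A \<subseteq> C"
  shows "oemb W A \<or> (\<exists>c\<in>C. \<exists>s. s ` A \<subseteq> underS W c \<and> smono A s)"
proof -
  let ?R = "Restr W A"
  have wR: "Well_order ?R" using Well_order_Restr[OF W_wo] .
  have FR: "Field ?R = A" using Field_Restr[OF assms] .
  consider "(?R, W) \<in> ordLess" | "(W, ?R) \<in> ordLeq" using ordLess_or_ordLeq[OF wR W_wo] by blast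
  then show ?thesis
  proof cases
    case 1
    then obtain f where f: "embedS ?R W f" unfolding ordLess_def by blast
    then have e: "embed ?R W f" and nb: "\<not> bij_betw f A C" unfolding embedS_def using FR Field_W by auto
    have inj: "inj_on f A" using embed_inj_on[OF wR e] FR by simp
    have of: "wo_rel.ofilter W (f ` A)" using embed_Field_ofilter[OF wR W_wo e] FR by simp
    have "f ` A \<noteq> C" using inj nb unfolding bij_betw_def by blast
    then obtain c where c: "c \<in> C" "f ` A = underS W c"
      using of wo_rel.ofilter_underS_Field[of W "f ` A"] W_wo Field_W unfolding wo_rel_def by auto
    have "smono A f"
      unfolding smono_def
    proof (intro ballI impI)
      fix x y assume "x \<in> A" "y \<in> A" "(x,y)\<in>W \<and> x\<noteq>y"
      then have "(x,y) \<in> ?R" by auto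
      then have "(f x, f y) \<in> W" using embed_compat[OF e] unfolding compat_def by blast
      moreover have "f x \<noteq> f y" using inj \<open>x \<in> A\<close> \<open>y \<in> A\<close> \<open>(x,y)\<in>W \<and> x\<noteq>y\<close> unfolding inj_on_def by blast
      ultimately show "(f x, f y)\<in>W \<and> f x \<noteq> f y" by blast
    qed
    then show ?thesis using c by blast
  next
    case 2
    then obtain f where e: "embed W ?R f" unfolding ordLeq_def by blast
    have inj: "inj_on f C" using embed_inj_on[OF W_wo e] Field_W by simp
    have "f ` C \<subseteq> A" using embed_Field[OF e] FR Field_W by simp
    moreover have "smono C f"
      unfolding smono_def
    proof (intro ballI impI)
      fix x y assume "x \<in> C" "y \<in> C" "(x,y)\<in>W \<and> x\<noteq>y"
      then have "(f x, f y) \<in> ?R" using embed_compat[OF e] unfolding compat_def by blast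
      moreover have "f x \<noteq> f y" using inj \<open>x \<in> C\<close> \<open>y \<in> C\<close> \<open>(x,y)\<in>W \<and> x\<noteq>y\<close> unfolding inj_on_def by blast
      ultimately show "(f x, f y)\<in>W \<and> f x \<noteq> f y" by blast
    qed
    ultimately show ?thesis using oemb_iff by blast
  qed
qed

lemma not_both:
  assumes "oemb W A" "c \<in> C" "s ` A \<subseteq> underS W c" "smono A s"
  shows False
proof -
  obtain g where g: "g ` C \<subseteq> A" "smono C g" using assms(1) oemb_iff by blast
  have uC: "underS W c \<subseteq> C" using W_C by (auto simp: underS_def)
  have "(s \<circ> g) ` C \<subseteq> underS W c" using g(1) assms(3) by auto
  then have sub: "(s \<circ> g) ` C \<subseteq> C" using uC by auto
  have "smono C (s \<circ> g)" unfolding smono_def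
  proof (intro ballI impI)
    fix x y assume xy: "x \<in> C" "y \<in> C" "(x,y)\<in>W \<and> x\<noteq>y"
    then have "(g x, g y)\<in>W \<and> g x\<noteq>g y" using g(2) unfolding smono_def by blast
    moreover have "g x \<in> A" "g y \<in> A" using xy g(1) by auto
    ultimately show "((s \<circ> g) x, (s \<circ> g) y)\<in>W \<and> (s \<circ> g) x\<noteq>(s \<circ> g) y"
      using assms(4) unfolding smono_def by auto
  qed
  then have "(c, s (g c)) \<in> W" using inflation[OF sub _ assms(2)] by simp
  moreover have "s (g c) \<in> underS W c" using assms(2) \<open>(s \<circ> g) ` C \<subseteq> underS W c\<close> by auto
  ultimately show False using W_anti by (auto simp: underS_def)
qed

lemma underS_C: "underS W c \<subseteq> C" using W_C by (auto simp: underS_def)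

lemma sup_fun:
  assumes "a\<in>C" "sa ` A \<subseteq> underS W a" "smono A sa" "A \<subseteq> C"
  shows "\<exists>F. (\<forall>x. F x \<in> C \<and> (F x, a) \<in> W) \<and>
             (\<forall>x x'. x\<in>A \<longrightarrow> (x,x')\<in>W \<longrightarrow> x\<noteq>x' \<longrightarrow> lt (F x) (F x')) \<and>
             (\<forall>x x'. (x,x')\<in>W \<longrightarrow> (F x, F x')\<in>W)"
proof -
  interpret wo_rel W using W_wo unfolding wo_rel_def .
  define U where "U x = {z\<in>C. \<forall>y\<in>A. (y,x)\<in>W \<and> y\<noteq>x \<longrightarrow> (sa y, z)\<in>W \<and> sa y \<noteq> z}" for x
  define F where "F x = minim (U x)" for x
  have aU: "a \<in> U x" for x using assms(1,2) by (auto simp: U_def underS_def)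
  have UC: "U x \<subseteq> Field W" for x by (auto simp: U_def Field_W)
  have FU: "F x \<in> U x" for x unfolding F_def using minim_in[OF UC] aU by blast
  have Fl: "z \<in> U x \<Longrightarrow> (F x, z) \<in> W" for x z unfolding F_def using minim_least[OF UC] by blast
  have P1: "\<forall>x. F x \<in> C \<and> (F x, a) \<in> W" using FU Fl[OF aU] by (auto simp: U_def)
  have P2: "lt (F x) (F x')" if x: "x \<in> A" "(x,x')\<in>W" "x\<noteq>x'" for x x'
  proof -
    have sxC: "sa x \<in> C" using x(1) assms(2) underS_C by blast
    have "sa x \<in> U x"
      using x(1) sxC assms(3) unfolding U_def smono_def by blast
    then have 1: "(F x, sa x) \<in> W" using Fl by blast
    have 2: "(sa x, F x') \<in> W \<and> sa x \<noteq> F x'" using FU[of x'] x unfolding U_def by blast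
    have "(F x, F x') \<in> W" using 1 2 W_tr by blast
    moreover have "F x \<noteq> F x'"
    proof
      assume "F x = F x'"
      then have "(F x', sa x) \<in> W" using 1 by simp
      then show False using 2 W_anti by blast
    qed
    moreover have "F x \<in> C" "F x' \<in> C" using FU by (auto simp: U_def)
    ultimately show "lt (F x) (F x')" using W_lt by blast
  qed
  have P3: "(F x, F x')\<in>W" if xx: "(x,x')\<in>W" for x x'
  proof -
    have "U x' \<subseteq> U x"
    proof
      fix z assume z: "z \<in> U x'"
      have "\<forall>y\<in>A. (y,x)\<in>W \<and> y\<noteq>x \<longrightarrow> (sa y, z)\<in>W \<and> sa y \<noteq> z"
      proof (intro ballI impI)
        fix y assume y: "y \<in> A" "(y,x)\<in>W \<and> y\<noteq>x"
        then have "(y,x')\<in>W" using xx W_tr by blast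
        moreover have "y \<noteq> x'" using y xx W_anti by blast
        ultimately show "(sa y, z)\<in>W \<and> sa y \<noteq> z" using z y(1) unfolding U_def by blast
      qed
      then show "z \<in> U x" using z by (auto simp: U_def)
    qed
    then show "(F x, F x')\<in>W" using Fl FU by blast
  qed
  show ?thesis using P1 P2 P3 by blast
qed

lemma le_add:
  assumes "f = f' \<or> lt f f'" "g = g' \<or> lt g g'"
  shows "(\<lambda>x. f x + g x) = (\<lambda>x. f' x + g' x) \<or> lt (\<lambda>x. f x + g x) (\<lambda>x. f' x + g' x)"
proof (cases "f = f'")
  case True
  show ?thesis
  proof (cases "g = g'")
    case True then show ?thesis using \<open>f = f'\<close> by simp
  next
    case False
    then have "lt g g'" using assms by blast
    then have "lt (\<lambda>x. g x + f x) (\<lambda>x. g' x + f' x)" using lt_add \<open>f = f'\<close> by blast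
    then show ?thesis by (simp add: add.commute)
  qed
next
  case False
  then have "lt f f'" using assms by blast
  then show ?thesis using lt_add assms(2) by blast
qed

lemma union_small:
  assumes "Field d \<noteq> {}" "A \<subseteq> C" "B \<subseteq> C"
    "a\<in>C" "sa ` A \<subseteq> underS W a" "smono A sa"
    "b\<in>C" "sb ` B \<subseteq> underS W b" "smono B sb"
  shows "\<not> oemb W (A \<union> B)"
proof
  assume emb: "oemb W (A \<union> B)"
  obtain Fa where Fa: "\<forall>x. Fa x \<in> C \<and> (Fa x, a) \<in> W"
             "\<forall>x x'. x\<in>A \<longrightarrow> (x,x')\<in>W \<longrightarrow> x\<noteq>x' \<longrightarrow> lt (Fa x) (Fa x')"
             "\<forall>x x'. (x,x')\<in>W \<longrightarrow> (Fa x, Fa x')\<in>W"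
    using sup_fun[OF assms(4,5,6,2)] by blast
  obtain Fb where Fb: "\<forall>x. Fb x \<in> C \<and> (Fb x, b) \<in> W"
             "\<forall>x x'. x\<in>B \<longrightarrow> (x,x')\<in>W \<longrightarrow> x\<noteq>x' \<longrightarrow> lt (Fb x) (Fb x')"
             "\<forall>x x'. (x,x')\<in>W \<longrightarrow> (Fb x, Fb x')\<in>W"
    using sup_fun[OF assms(7,8,9,3)] by blast
  obtain x0 where x0: "x0 \<in> Field d" using assms(1) by blast
  define e where "e = (\<lambda>z. if z = x0 then 1 else (0::nat))"
  have eC: "e \<in> C" using x0 by (auto simp: e_def omega_exp_carrier_def)
  define ab where "ab = (\<lambda>z. a z + b z)"
  define c where "c = (\<lambda>z. ab z + e z)"
  have abC: "ab \<in> C" unfolding ab_def using C_add assms(4,7) by blast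
  have cC: "c \<in> C" unfolding c_def using C_add abC eC by blast
  have abc: "lt ab c" unfolding lt_def c_def e_def using x0 by auto
  define s where "s x = (\<lambda>z. Fa x z + Fb x z)" for x
  have sC: "s x \<in> C" for x unfolding s_def using C_add Fa(1) Fb(1) by blast
  have sle: "s x = ab \<or> lt (s x) ab" for x
    unfolding s_def ab_def
    by (rule le_add) (use Fa(1) Fb(1) W_iff in blast)+
  have "s x \<in> underS W c" for x
  proof -
    have "lt (s x) c" using sle[of x] abc lt_trans by metis
    then show ?thesis using sC cC W_lt by (auto simp: underS_def)
  qed
  then have sub: "s ` (A \<union> B) \<subseteq> underS W c" by blast
  have "smono (A \<union> B) s" unfolding smono_def
  proof (intro ballI impI)
    fix x y assume xy: "x \<in> A \<union> B" "y \<in> A \<union> B" "(x,y)\<in>W \<and> x\<noteq>y"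
    have fa: "Fa x = Fa y \<or> lt (Fa x) (Fa y)" using Fa(3) xy W_iff by blast
    have fb: "Fb x = Fb y \<or> lt (Fb x) (Fb y)" using Fb(3) xy W_iff by blast
    have "lt (s x) (s y)"
    proof (cases "x \<in> A")
      case True
      then have "lt (Fa x) (Fa y)" using Fa(2) xy by blast
      then show ?thesis unfolding s_def using lt_add fb by blast
    next
      case False
      then have "x \<in> B" using xy by blast
      then have "lt (Fb x) (Fb y)" using Fb(2) xy by blast
      then have "lt (\<lambda>z. Fb x z + Fa x z) (\<lambda>z. Fb y z + Fa y z)" using lt_add fa by blast
      then show ?thesis unfolding s_def by (simp add: add.commute)
    qed
    then show "(s x, s y)\<in>W \<and> s x \<noteq> s y" using W_lt sC by blast
  qed
  then show False using not_both[OF emb cC sub] by blast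
qed

lemma emb_props:
  assumes "A \<subseteq> C" "embed W (Restr W A) f"
  shows "f ` C \<subseteq> A" "smono C f" "inj_on f C"
proof -
  have FR: "Field (Restr W A) = A" using Field_Restr[OF assms(1)] .
  show inj: "inj_on f C" using embed_inj_on[OF W_wo assms(2)] Field_W by simp
  show "f ` C \<subseteq> A" using embed_Field[OF assms(2)] FR Field_W by simp
  show "smono C f"
    unfolding smono_def
  proof (intro ballI impI)
    fix x y assume "x \<in> C" "y \<in> C" "(x,y)\<in>W \<and> x\<noteq>y"
    then have "(f x, f y) \<in> Restr W A" using embed_compat[OF assms(2)] unfolding compat_def by blast
    moreover have "f x \<noteq> f y" using inj \<open>x \<in> C\<close> \<open>y \<in> C\<close> \<open>(x,y)\<in>W \<and> x\<noteq>y\<close> unfolding inj_on_def by blast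
    ultimately show "(f x, f y)\<in>W \<and> f x \<noteq> f y" by blast
  qed
qed

lemma oemb_embed:
  assumes "A \<subseteq> C" "oemb W A"
  shows "\<exists>f. embed W (Restr W A) f"
proof -
  have "\<not> (\<exists>c\<in>C. \<exists>s. s ` A \<subseteq> underS W c \<and> smono A s)"
    using not_both[OF assms(2)] by blast
  let ?R = "Restr W A"
  have wR: "Well_order ?R" using Well_order_Restr[OF W_wo] .
  have FR: "Field ?R = A" using Field_Restr[OF assms(1)] .
  consider "(?R, W) \<in> ordLess" | "(W, ?R) \<in> ordLeq" using ordLess_or_ordLeq[OF wR W_wo] by blast
  then show ?thesis
  proof cases
    case 1
    then obtain f where f: "embedS ?R W f" unfolding ordLess_def by blast
    then have e: "embed ?R W f" and nb: "\<not> bij_betw f A C" unfolding embedS_def using FR Field_W by auto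
    have inj: "inj_on f A" using embed_inj_on[OF wR e] FR by simp
    have of: "wo_rel.ofilter W (f ` A)" using embed_Field_ofilter[OF wR W_wo e] FR by simp
    have "f ` A \<noteq> C" using inj nb unfolding bij_betw_def by blast
    then obtain c where c: "c \<in> C" "f ` A = underS W c"
      using of wo_rel.ofilter_underS_Field[of W "f ` A"] W_wo Field_W unfolding wo_rel_def by auto
    have "smono A f"
      unfolding smono_def
    proof (intro ballI impI)
      fix x y assume "x \<in> A" "y \<in> A" "(x,y)\<in>W \<and> x\<noteq>y"
      then have "(x,y) \<in> ?R" by auto
      then have "(f x, f y) \<in> W" using embed_compat[OF e] unfolding compat_def by blast
      moreover have "f x \<noteq> f y" using inj \<open>x \<in> A\<close> \<open>y \<in> A\<close> \<open>(x,y)\<in>W \<and> x\<noteq>y\<close> unfolding inj_on_def by blast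
      ultimately show "(f x, f y)\<in>W \<and> f x \<noteq> f y" by blast
    qed
    then show ?thesis using c not_both[OF assms(2)] by blast
  next
    case 2 then show ?thesis unfolding ordLeq_def by blast
  qed
qed

lemma PP_iff: "A \<in> PP W \<longleftrightarrow> A \<subseteq> C \<and> oemb W A"
proof
  assume "A \<in> PP W"
  then obtain f where A: "A \<subseteq> C" and f: "bij_betw f C A" "\<forall>x\<in>C. \<forall>y\<in>C. (x,y)\<in>W \<longleftrightarrow> (f x, f y)\<in>W"
    unfolding PP_def Field_W by blast
  have "f ` C \<subseteq> A" using f(1) unfolding bij_betw_def by blast
  moreover have "smono C f" unfolding smono_def
    using f bij_betw_imp_inj_on[OF f(1)] unfolding inj_on_def by blast
  ultimately show "A \<subseteq> C \<and> oemb W A" using A oemb_iff by blast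
next
  assume a: "A \<subseteq> C \<and> oemb W A"
  then obtain f where e: "embed W (Restr W A) f" using oemb_embed by blast
  note fp = emb_props[OF conjunct1[OF a] e]
  have surj: "A \<subseteq> f ` C"
  proof
    fix z assume z: "z \<in> A"
    have of: "ofilter (Restr W A) (f ` C)"
      using embed_Field_ofilter[OF W_wo Well_order_Restr[OF W_wo] e] Field_W by simp
    have zC: "z \<in> C" using z a by blast
    have fzC: "f z \<in> C" "f z \<in> A" using fp(1) zC a by auto
    have "(z, f z) \<in> W" using inflation[of f] fp zC a by blast
    then have "(z, f z) \<in> Restr W A" using z fzC by auto
    then have "z \<in> under (Restr W A) (f z)" by (simp add: under_def)
    moreover have "f z \<in> f ` C" using zC by blast
    ultimately show "z \<in> f ` C" using of unfolding ofilter_def by blast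
  qed
  have bij: "bij_betw f C A" using fp surj unfolding bij_betw_def by blast
  have iff: "\<forall>x\<in>C. \<forall>y\<in>C. (x,y)\<in>W \<longleftrightarrow> (f x, f y)\<in>W"
  proof (intro ballI iffI)
    fix x y assume "x \<in> C" "y \<in> C" "(x,y) \<in> W"
    then show "(f x, f y) \<in> W" using embed_compat[OF e] unfolding compat_def by blast
  next
    fix x y assume xy: "x \<in> C" "y \<in> C" "(f x, f y) \<in> W"
    show "(x,y) \<in> W"
    proof (rule ccontr)
      assume "(x,y) \<notin> W"
      then have "(y,x) \<in> W" "y \<noteq> x" using W_tot xy W_refl by blast+
      then have "(f y, f x) \<in> W" "f y \<noteq> f x" using fp(2) xy unfolding smono_def by blast+
      then show False using xy(3) W_anti by blast
    qed
  qed
  show "A \<in> PP W" unfolding PP_def Field_W using a bij iff by blast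
qed

lemma zero_C: "(\<lambda>x. 0) \<in> C" by (simp add: omega_exp_carrier_def)

lemma oemb_C: "oemb W C"
  unfolding oemb_iff smono_def by (intro exI[of _ id]) auto

lemma small_witness:
  assumes "A \<subseteq> C" "\<not> oemb W A"
  shows "\<exists>c\<in>C. \<exists>s. s ` A \<subseteq> underS W c \<and> smono A s"
  using dichotomy[OF assms(1)] assms(2) by blast

lemma ideal: "Field d \<noteq> {} \<Longrightarrow> is_ideal (Field W) (emb_ideal W)"
  unfolding is_ideal_def emb_ideal_def Field_W
proof (intro conjI)
  assume ne: "Field d \<noteq> {}"
  show "{I. I \<subseteq> C \<and> \<not> oemb W I} \<subseteq> Pow C" by blast
  have "\<not> oemb W {}" using zero_C unfolding oemb_iff by blast
  then show "{} \<in> {I. I \<subseteq> C \<and> \<not> oemb W I}" by blast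
  show "C \<notin> {I. I \<subseteq> C \<and> \<not> oemb W I}" using oemb_C by blast
  show "\<forall>A\<in>{I. I \<subseteq> C \<and> \<not> oemb W I}. \<forall>B. B \<subseteq> A \<longrightarrow> B \<in> {I. I \<subseteq> C \<and> \<not> oemb W I}"
    unfolding oemb_iff by blast
  show "\<forall>A\<in>{I. I \<subseteq> C \<and> \<not> oemb W I}. \<forall>B\<in>{I. I \<subseteq> C \<and> \<not> oemb W I}. A \<union> B \<in> {I. I \<subseteq> C \<and> \<not> oemb W I}"
  proof (intro ballI)
    fix A B assume A: "A \<in> {I. I \<subseteq> C \<and> \<not> oemb W I}" and B: "B \<in> {I. I \<subseteq> C \<and> \<not> oemb W I}"
    have AC: "A \<subseteq> C" "\<not> oemb W A" using A by blast+
    have BC: "B \<subseteq> C" "\<not> oemb W B" using B by blast+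
    obtain a sa where a: "a\<in>C" "sa ` A \<subseteq> underS W a" "smono A sa" using small_witness[OF AC] by blast
    obtain b sb where b: "b\<in>C" "sb ` B \<subseteq> underS W b" "smono B sb" using small_witness[OF BC] by blast
    have "\<not> oemb W (A \<union> B)" by (rule union_small[OF ne AC(1) BC(1) a b])
    then show "A \<union> B \<in> {I. I \<subseteq> C \<and> \<not> oemb W I}" using A B by blast
  qed
qed

abbreviation "II \<equiv> emb_ideal W"
abbreviation "PW \<equiv> PP W"

lemma II_iff: "A \<in> II \<longleftrightarrow> A \<subseteq> C \<and> \<not> oemb W A"
  by (simp add: emb_ideal_def Field_W)

lemma PW_iff: "A \<in> PW \<longleftrightarrow> A \<subseteq> C \<and> A \<notin> II"
  using PP_iff II_iff by blast

context
  assumes NE: "Field d \<noteq> {}"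
begin

lemma II_ideal: "is_ideal C II" using ideal[OF NE] Field_W by simp

lemma II_sub: "A \<in> II \<Longrightarrow> B \<subseteq> A \<Longrightarrow> B \<in> II"
  using II_ideal unfolding is_ideal_def by blast
lemma II_un: "A \<in> II \<Longrightarrow> B \<in> II \<Longrightarrow> A \<union> B \<in> II"
  using II_ideal unfolding is_ideal_def by blast
lemma II_empty: "{} \<in> II"
  using II_ideal unfolding is_ideal_def by blast

lemma PW_I: "A \<subseteq> C \<Longrightarrow> A \<notin> II \<Longrightarrow> A \<in> PW" using PW_iff by blast
lemma PW_D1: "A \<in> PW \<Longrightarrow> A \<subseteq> C" using PW_iff by blast
lemma PW_D2: "A \<in> PW \<Longrightarrow> A \<notin> II" using PW_iff by blast

lemma sep_iff:
  assumes "A \<in> PW" "B \<in> PW"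
  shows "sep_le PW (\<subseteq>) A B \<longleftrightarrow> A - B \<in> II"
proof
  assume sep: "sep_le PW (\<subseteq>) A B"
  show "A - B \<in> II"
  proof (rule ccontr)
    assume nI: "A - B \<notin> II"
    have "A - B \<subseteq> C" using PW_D1[OF assms(1)] by blast
    then have "A - B \<in> PW" using PW_I nI by blast
    then obtain S where S: "S \<in> PW" "S \<subseteq> A - B" "S \<subseteq> B" using sep unfolding sep_le_def by blast
    then have "S = {}" by blast
    then have "{} \<in> PW" using S(1) by blast
    then have "{} \<notin> II" by (rule PW_D2)
    then show False using II_empty by blast
  qed
next
  assume AB: "A - B \<in> II"
  show "sep_le PW (\<subseteq>) A B" unfolding sep_le_def
  proof (intro ballI impI)
    fix R assume R: "R \<in> PW" "R \<subseteq> A"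
    have "R - B \<subseteq> A - B" using R(2) by blast
    then have RB: "R - B \<in> II" by (rule II_sub[OF AB])
    have "R \<inter> B \<notin> II"
    proof
      assume "R \<inter> B \<in> II"
      then have "(R \<inter> B) \<union> (R - B) \<in> II" by (rule II_un[OF _ RB])
      moreover have "(R \<inter> B) \<union> (R - B) = R" by blast
      ultimately have "R \<in> II" by simp
      then show False using PW_D2[OF R(1)] by blast
    qed
    moreover have "R \<inter> B \<subseteq> C" using PW_D1[OF R(1)] by blast
    ultimately have "R \<inter> B \<in> PW" using PW_I by blast
    then show "\<exists>S\<in>PW. S \<subseteq> R \<and> S \<subseteq> B" by blast
  qed
qed

abbreviation "BQ \<equiv> bq_rel C II"
abbreviation "EQ \<equiv> sq_equiv PW (\<subseteq>)"

lemma EQ_iff: "(p,q) \<in> EQ \<longleftrightarrow> p \<in> PW \<and> q \<in> PW \<and> p - q \<in> II \<and> q - p \<in> II"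
proof -
  have "(p,q) \<in> EQ \<longleftrightarrow> p \<in> PW \<and> q \<in> PW \<and> sep_le PW (\<subseteq>) p q \<and> sep_le PW (\<subseteq>) q p"
    by (simp add: sq_equiv_def)
  then show ?thesis using sep_iff[of p q] sep_iff[of q p] by blast
qed

lemma BQ_iff: "(p,q) \<in> BQ \<longleftrightarrow> p \<subseteq> C \<and> q \<subseteq> C \<and> (p - q) \<union> (q - p) \<in> II"
  by (simp add: bq_rel_def)

lemma symdiff_I: "(p - q) \<union> (q - p) \<in> II \<longleftrightarrow> p - q \<in> II \<and> q - p \<in> II"
proof
  assume h: "(p - q) \<union> (q - p) \<in> II"
  have "p - q \<subseteq> (p - q) \<union> (q - p)" "q - p \<subseteq> (p - q) \<union> (q - p)" by blast+
  then show "p - q \<in> II \<and> q - p \<in> II" using II_sub[OF h] by blast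
next
  assume "p - q \<in> II \<and> q - p \<in> II"
  then show "(p - q) \<union> (q - p) \<in> II" using II_un by blast
qed

lemma stays_large:
  assumes "p \<notin> II" "p - q \<in> II"
  shows "q \<notin> II"
proof
  assume "q \<in> II"
  then have h: "q \<union> (p - q) \<in> II" by (rule II_un[OF _ assms(2)])
  have "p \<subseteq> q \<union> (p - q)" by blast
  then have "p \<in> II" by (rule II_sub[OF h])
  then show False using assms(1) by blast
qed

lemma class_eq:
  assumes "p \<in> PW"
  shows "EQ `` {p} = BQ `` {p}"
proof (intro equalityI subsetI)
  fix q assume "q \<in> EQ `` {p}"
  then have "(p,q) \<in> EQ" by simp
  then have h: "p \<in> PW" "q \<in> PW" "p - q \<in> II" "q - p \<in> II" using EQ_iff by blast+
  have "(p - q) \<union> (q - p) \<in> II" using symdiff_I h(3,4) by blast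
  then have "(p,q) \<in> BQ" using BQ_iff PW_D1[OF h(1)] PW_D1[OF h(2)] by blast
  then show "q \<in> BQ `` {p}" by simp
next
  fix q assume "q \<in> BQ `` {p}"
  then have "(p,q) \<in> BQ" by simp
  then have q: "q \<subseteq> C" "(p - q) \<union> (q - p) \<in> II" using BQ_iff by blast+
  have pq: "p - q \<in> II" "q - p \<in> II" using q(2) symdiff_I by blast+
  have "q \<notin> II" by (rule stays_large[OF PW_D2[OF assms] pq(1)])
  then have "q \<in> PW" using q(1) PW_I by blast
  then have "(p,q) \<in> EQ" using EQ_iff assms pq by blast
  then show "q \<in> EQ `` {p}" by simp
qed

lemma BQ_empty: "A \<subseteq> C \<Longrightarrow> (BQ `` {A} = BQ `` {{}}) \<longleftrightarrow> A \<in> II"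
proof
  assume A: "A \<subseteq> C" and eq: "BQ `` {A} = BQ `` {{}}"
  have "(A - A) \<union> (A - A) \<in> II" using II_empty by simp
  then have "(A,A) \<in> BQ" using BQ_iff A by blast
  then have "A \<in> BQ `` {A}" by simp
  then have "A \<in> BQ `` {{}}" using eq by simp
  then have "({},A) \<in> BQ" by simp
  then have "({} - A) \<union> (A - {}) \<in> II" using BQ_iff by blast
  then show "A \<in> II" by simp
next
  assume A: "A \<subseteq> C" and AI: "A \<in> II"
  show "BQ `` {A} = BQ `` {{}}"
  proof (intro equalityI subsetI)
    fix q assume "q \<in> BQ `` {A}"
    then have "(A,q) \<in> BQ" by simp
    then have q: "q \<subseteq> C" "(A - q) \<union> (q - A) \<in> II" using BQ_iff by blast+
    have "q - A \<in> II" using q(2) symdiff_I by blast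
    then have "q \<notin> II \<Longrightarrow> False" using stays_large[of q A] AI by blast
    then have "q \<in> II" by blast
    then have "({} - q) \<union> (q - {}) \<in> II" by simp
    then have "({},q) \<in> BQ" using BQ_iff q(1) by blast
    then show "q \<in> BQ `` {{}}" by simp
  next
    fix q assume "q \<in> BQ `` {{}}"
    then have "({},q) \<in> BQ" by simp
    then have q: "q \<subseteq> C" "({} - q) \<union> (q - {}) \<in> II" using BQ_iff by blast+
    then have qI: "q \<in> II" by simp
    have "A - q \<subseteq> A" "q - A \<subseteq> q" by blast+
    then have "A - q \<in> II" "q - A \<in> II" using II_sub[OF AI] II_sub[OF qI] by blast+
    then have "(A - q) \<union> (q - A) \<in> II" using symdiff_I by blast
    then have "(A,q) \<in> BQ" using BQ_iff q(1) A by blast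
    then show "q \<in> BQ `` {A}" by simp
  qed
qed

lemma carriers_eq: "sq_carrier PW (\<subseteq>) = bq_nonzero C II"
proof (intro equalityI subsetI)
  fix X assume "X \<in> sq_carrier PW (\<subseteq>)"
  then obtain p where p: "p \<in> PW" "X = EQ `` {p}" unfolding sq_carrier_def quotient_def by blast
  then have X: "X = BQ `` {p}" using class_eq by simp
  have pC: "p \<subseteq> C" and pI: "p \<notin> II" using PW_D1[OF p(1)] PW_D2[OF p(1)] by auto
  have "X \<noteq> BQ `` {{}}" using X BQ_empty[OF pC] pI by blast
  moreover have "X \<in> Pow C // BQ" unfolding quotient_def using X pC by blast
  ultimately show "X \<in> bq_nonzero C II" unfolding bq_nonzero_def by blast
next
  fix X assume "X \<in> bq_nonzero C II"
  then obtain A where A: "A \<subseteq> C" "X = BQ `` {A}" "X \<noteq> BQ `` {{}}"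
    unfolding bq_nonzero_def quotient_def by blast
  then have "A \<notin> II" using BQ_empty[OF A(1)] by blast
  then have AP: "A \<in> PW" using A(1) PW_I by blast
  then have "X = EQ `` {A}" using A(2) class_eq by simp
  then show "X \<in> sq_carrier PW (\<subseteq>)" unfolding sq_carrier_def quotient_def using AP by blast
qed

lemma classes_sub: "X \<in> sq_carrier PW (\<subseteq>) \<Longrightarrow> X \<subseteq> PW"
  unfolding sq_carrier_def quotient_def sq_equiv_def by blast

lemma iso_part: "order_iso (sq_carrier PW (\<subseteq>)) (sq_le PW (\<subseteq>)) (bq_nonzero C II) (bq_le II) id"
  unfolding order_iso_def
proof (intro conjI ballI)
  show "bij_betw id (sq_carrier PW (\<subseteq>)) (bq_nonzero C II)" using carriers_eq by simp
  fix X Y assume "X \<in> sq_carrier PW (\<subseteq>)" "Y \<in> sq_carrier PW (\<subseteq>)"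
  then have "X \<subseteq> PW" "Y \<subseteq> PW" using classes_sub by auto
  then show "sq_le PW (\<subseteq>) X Y = bq_le II (id X) (id Y)"
  proof -
    have h: "\<forall>p\<in>X. \<forall>q\<in>Y. sep_le PW (\<subseteq>) p q \<longleftrightarrow> p - q \<in> II"
      using sep_iff \<open>X \<subseteq> PW\<close> \<open>Y \<subseteq> PW\<close> by blast
    show ?thesis unfolding sq_le_def bq_le_def id_def using h by blast
  qed
qed

end

end

lemma lists_len_card:
  assumes inf: "infinite A"
  shows "(card_of {xs \<in> lists A. length xs = n}, card_of A) \<in> ordLeq"
proof (induction n)
  case 0
  have ne: "A \<noteq> {}" using inf by auto
  have "{xs \<in> lists A. length xs = 0} = {[]}" by auto
  then show ?case using card_of_singl_ordLeq[OF ne, of "[]"] by simp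
next
  case (Suc n)
  let ?L = "{xs \<in> lists A. length xs = n}"
  obtain a where a: "a \<in> A" using inf by (metis ex_in_conv finite.emptyI)
  have "replicate n a \<in> ?L" using a by auto
  then have ne: "?L \<noteq> {}" by blast
  have "inj_on (\<lambda>xs. (hd xs, tl xs)) {xs \<in> lists A. length xs = Suc n}"
  proof (rule inj_onI)
    fix xs ys assume "xs \<in> {xs \<in> lists A. length xs = Suc n}" "ys \<in> {xs \<in> lists A. length xs = Suc n}"
      "(hd xs, tl xs) = (hd ys, tl ys)"
    then have "xs \<noteq> []" "ys \<noteq> []" "hd xs = hd ys" "tl xs = tl ys" by auto
    then show "xs = ys" by (metis list.collapse)
  qed
  moreover have "(\<lambda>xs. (hd xs, tl xs)) ` {xs \<in> lists A. length xs = Suc n} \<subseteq> A \<times> ?L"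
  proof
    fix p assume "p \<in> (\<lambda>xs. (hd xs, tl xs)) ` {xs \<in> lists A. length xs = Suc n}"
    then obtain xs where xs: "xs \<in> lists A" "length xs = Suc n" "p = (hd xs, tl xs)" by blast
    then obtain y ys where "xs = y # ys" by (cases xs) auto
    then show "p \<in> A \<times> ?L" using xs by auto
  qed
  ultimately have "(card_of {xs \<in> lists A. length xs = Suc n}, card_of (A \<times> ?L)) \<in> ordLeq"
    using card_of_ordLeq by blast
  moreover have "(card_of (A \<times> ?L), card_of A) \<in> ordIso"
    using card_of_Times_infinite[OF inf ne Suc.IH] by blast
  ultimately show ?case using ordLeq_ordIso_trans by blast
qed

lemma lists_card:
  assumes inf: "infinite A"
  shows "(card_of (lists A), card_of A) \<in> ordLeq"
proof -
  have eq: "lists A = (\<Union>n \<in> (UNIV::nat set). {xs \<in> lists A. length xs = n})" by blast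
  have h2: "\<forall>i \<in> (UNIV::nat set). (card_of {xs \<in> lists A. length xs = i}, card_of A) \<in> ordLeq"
    using lists_len_card[OF inf] by blast
  have "(card_of (\<Union>n \<in> (UNIV::nat set). {xs \<in> lists A. length xs = n}), card_of A) \<in> ordLeq"
    by (rule card_of_UNION_ordLeq_infinite[OF inf infinite_iff_card_of_nat[THEN iffD1, OF inf] h2])
  then show ?thesis using eq by simp
qed

lemma carrier_card:
  assumes inf: "infinite (Field d)"
  shows "(card_of (omega_exp_carrier d), card_of (Field d)) \<in> ordLeq"
proof -
  define G where "G f = {(x, f x) | x. f x \<noteq> 0}" for f :: "'a \<Rightarrow> nat"
  define \<phi> where "\<phi> f = (SOME xs. set xs = G f)" for f
  have setphi: "set (\<phi> f) = G f" if "f \<in> omega_exp_carrier d" for f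
  proof -
    have "finite {x. f x \<noteq> 0}" using that by (simp add: omega_exp_carrier_def)
    then have "finite (G f)" unfolding G_def by (simp add: setcompr_eq_image)
    then obtain xs where "set xs = G f" using finite_list by blast
    then show ?thesis unfolding \<phi>_def by (metis (mono_tags) someI_ex)
  qed
  have "inj_on \<phi> (omega_exp_carrier d)"
  proof (rule inj_onI)
    fix f g assume f: "f \<in> omega_exp_carrier d" and g: "g \<in> omega_exp_carrier d" and eq: "\<phi> f = \<phi> g"
    have GG: "G f = G g" using setphi[OF f] setphi[OF g] eq by simp
    show "f = g"
    proof
      fix x
      show "f x = g x"
      proof (cases "f x = 0")
        case True
        show ?thesis
        proof (rule ccontr)
          assume "f x \<noteq> g x"
          then have "(x, g x) \<in> G g" using True unfolding G_def by auto
          then have "(x, g x) \<in> G f" using GG by simp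
          then show False using True \<open>f x \<noteq> g x\<close> unfolding G_def by auto
        qed
      next
        case False
        then have "(x, f x) \<in> G f" unfolding G_def by auto
        then have "(x, f x) \<in> G g" using GG by simp
        then show ?thesis unfolding G_def by auto
      qed
    qed
  qed
  moreover have "\<phi> ` omega_exp_carrier d \<subseteq> lists (Field d \<times> (UNIV::nat set))"
  proof
    fix xs assume "xs \<in> \<phi> ` omega_exp_carrier d"
    then obtain f where f: "f \<in> omega_exp_carrier d" "xs = \<phi> f" by blast
    have "G f \<subseteq> Field d \<times> UNIV"
      using f(1) unfolding G_def omega_exp_carrier_def by auto
    then show "xs \<in> lists (Field d \<times> (UNIV::nat set))" using setphi[OF f(1)] f(2) by auto
  qed
  ultimately have 1: "(card_of (omega_exp_carrier d), card_of (lists (Field d \<times> (UNIV::nat set)))) \<in> ordLeq"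
    using card_of_ordLeq by blast
  have "Field d \<noteq> {}" using inf by auto
  then have inf2: "infinite (Field d \<times> (UNIV::nat set))" using inf
    by (simp add: finite_cartesian_product_iff)
  have 2: "(card_of (lists (Field d \<times> (UNIV::nat set))), card_of (Field d \<times> (UNIV::nat set))) \<in> ordLeq"
    using lists_card[OF inf2] .
  have 3: "(card_of (Field d \<times> (UNIV::nat set)), card_of (Field d)) \<in> ordIso"
    using card_of_Times_infinite[OF inf UNIV_not_empty infinite_iff_card_of_nat[THEN iffD1, OF inf]] by (rule conjunct1)
  show ?thesis using ordLeq_transitive[OF 1 ordLeq_ordIso_trans[OF 2 3]] .
qed

lemma Pow_card:
  assumes "(card_of A, card_of B) \<in> ordLeq"
  shows "(card_of (Pow A), card_of (Pow B)) \<in> ordLeq"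
proof -
  have "\<exists>g. inj_on g A \<and> g ` A \<subseteq> B" using assms card_of_ordLeq[of A B] by simp
  then obtain g where g: "inj_on g A" "g ` A \<subseteq> B" by blast
  have "inj_on (image g) (Pow A)" using inj_on_image_Pow[OF g(1)] .
  moreover have "image g ` Pow A \<subseteq> Pow B" using g(2) by blast
  ultimately have "\<exists>h. inj_on h (Pow A) \<and> h ` Pow A \<subseteq> Pow B" by blast
  then show ?thesis using card_of_ordLeq[of "Pow A" "Pow B"] by simp
qed

theorem mainTheorem4:
  fixes d :: "'b rel"
  assumes "well_order_on (Field d) d" and "Field d \<noteq> {}"
  shows "is_ideal (Field (omega_exp d)) (emb_ideal (omega_exp d))
    \<and> PP (omega_exp d) = {A. A \<subseteq> Field (omega_exp d) \<and> A \<notin> emb_ideal (omega_exp d)}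
    \<and> (\<forall>A \<in> PP (omega_exp d). \<forall>B \<in> PP (omega_exp d).
          sep_le (PP (omega_exp d)) (\<subseteq>) A B \<longleftrightarrow> A - B \<in> emb_ideal (omega_exp d))
    \<and> (\<exists>f. order_iso (sq_carrier (PP (omega_exp d)) (\<subseteq>)) (sq_le (PP (omega_exp d)) (\<subseteq>))
                      (bq_nonzero (Field (omega_exp d)) (emb_ideal (omega_exp d)))
                      (bq_le (emb_ideal (omega_exp d))) f)
    \<and> ((natLeq, d) \<in> ordLeq \<longrightarrow>
          (card_of (sq_carrier (PP (omega_exp d)) (\<subseteq>)), card_of (Pow (Field d))) \<in> ordLeq)"
proof -
  interpret OE d using assms(1) by unfold_locales
  note NE = assms(2)
  have P1: "is_ideal (Field W) II" using ideal[OF NE] .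
  have P2: "PW = {A. A \<subseteq> Field W \<and> A \<notin> II}" using PW_iff Field_W by blast
  have P3: "\<forall>A \<in> PW. \<forall>B \<in> PW. sep_le PW (\<subseteq>) A B \<longleftrightarrow> A - B \<in> II"
    using sep_iff[OF NE] by blast
  have P4: "\<exists>f. order_iso (sq_carrier PW (\<subseteq>)) (sq_le PW (\<subseteq>)) (bq_nonzero (Field W) II) (bq_le II) f"
    using iso_part[OF NE] Field_W by auto
  have P5: "(card_of (sq_carrier PW (\<subseteq>)), card_of (Pow (Field d))) \<in> ordLeq"
    if nl: "(natLeq, d) \<in> ordLeq"
  proof -
    have inf: "infinite (Field d)"
    proof
      assume fin: "finite (Field d)"
      have "(d, natLeq) \<in> ordLess"
        using finite_ordLess_infinite[OF assms(1) natLeq_Well_order fin] Field_natLeq by simp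
      then show False using not_ordLess_ordLeq nl by blast
    qed
    have "sq_carrier PW (\<subseteq>) = (\<lambda>p. EQ `` {p}) ` PW"
      unfolding sq_carrier_def quotient_def by auto
    then have 1: "(card_of (sq_carrier PW (\<subseteq>)), card_of PW) \<in> ordLeq"
      using card_of_image by metis
    have "PW \<subseteq> Pow C" using PW_D1[OF NE] by blast
    then have 2: "(card_of PW, card_of (Pow C)) \<in> ordLeq" by (rule card_of_mono1)
    have 3: "(card_of (Pow C), card_of (Pow (Field d))) \<in> ordLeq"
      using Pow_card[OF carrier_card[OF inf]] .
    show ?thesis using ordLeq_transitive[OF 1 ordLeq_transitive[OF 2 3]] .
  qed
  show ?thesis using P1 P2 P3 P4 P5 by blast
qed

end
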